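(* Let $0<a<1$ and let $w^*_n(a)$, $n\ge0$, be the rational functions of $(r,y,z)$ defined in the context. Then for all $n\ge1$, $$w^*_n(a)^2-w^*_{n+1}(a)w^*_{n-1}(a)=a^2(1-a)^2r^2z^4x_a^{\,n-2}.$$
   Context: Let $r,y,z$ be indeterminates. For $c\in(0,1)$ put $\omega_c:=1-(1-c)^2r^2y^2z^2$, $\tau_c:=1+(1-c)^2r^2z^2y(1-y)$, $x_c:=c^2z^2\tau_c^2$, $\beta_c:=1+z^2\big(c^2-(1-c)^2r^2(y^2+c^2(1-y)^2z^2)\big)$. Define $w^*_0(c):=(\beta_c-\omega_c)/x_c$, $w^*_1(c):=1$, and $w^*_{n+1}(c):=\beta_cw^*_n(c)-x_cw^*_{n-1}(c)$ for $n\ge1$ (so $w^*_2(c)=\omega_c$). *)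

theory Defs
  imports Complex_Main
begin

text \<open>The indeterminates r, y, z are evaluated at real points; the rational-function
identity is stated at every real point where the denominators (powers of x_c) are nonzero.\<close>

definition omegac :: "real \<Rightarrow> real \<Rightarrow> real \<Rightarrow> real \<Rightarrow> real" where
  "omegac c r y z = 1 - (1 - c)^2 * r^2 * y^2 * z^2"

definition tauc :: "real \<Rightarrow> real \<Rightarrow> real \<Rightarrow> real \<Rightarrow> real" where
  "tauc c r y z = 1 + (1 - c)^2 * r^2 * z^2 * y * (1 - y)"

definition xc :: "real \<Rightarrow> real \<Rightarrow> real \<Rightarrow> real \<Rightarrow> real" where
  "xc c r y z = c^2 * z^2 * (tauc c r y z)^2"

definition betac :: "real \<Rightarrow> real \<Rightarrow> real \<Rightarrow> real \<Rightarrow> real" where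
  "betac c r y z = 1 + z^2 * (c^2 - (1 - c)^2 * r^2 * (y^2 + c^2 * (1 - y)^2 * z^2))"

fun wstar :: "real \<Rightarrow> real \<Rightarrow> real \<Rightarrow> real \<Rightarrow> nat \<Rightarrow> real" where
  "wstar c r y z 0 = (betac c r y z - omegac c r y z) / xc c r y z"
| "wstar c r y z (Suc 0) = 1"
| "wstar c r y z (Suc (Suc n)) =
     betac c r y z * wstar c r y z (Suc n) - xc c r y z * wstar c r y z n"

end

theory Submission
  imports Defs
begin

lemma poly_id:
  "xc a r y z - omegac a r y z * (betac a r y z - omegac a r y z) = a^2 * (1 - a)^2 * r^2 * z^4"
  unfolding xc_def omegac_def betac_def tauc_def by (simp add: algebra_simps power2_eq_square power4_eq_xxxx)

lemma stepD:
  "(wstar a r y z (Suc (Suc m)))^2 - wstar a r y z (Suc (Suc (Suc m))) * wstar a r y z (Suc m)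
   = xc a r y z * ((wstar a r y z (Suc m))^2 - wstar a r y z (Suc (Suc m)) * wstar a r y z m)"
  by (simp add: algebra_simps power2_eq_square)

lemma closed:
  assumes "xc a r y z \<noteq> 0"
  shows "(wstar a r y z (Suc m))^2 - wstar a r y z (Suc (Suc m)) * wstar a r y z m
     = a^2 * (1 - a)^2 * r^2 * z^4 * (xc a r y z)^m / xc a r y z"
proof (induction m)
  case 0
  have "wstar a r y z 2 = omegac a r y z"
    using assms by (simp add: numeral_2_eq_2)
  then show ?case using assms poly_id[of a r y z]
    by (simp add: numeral_2_eq_2 field_simps)
next
  case (Suc m)
  then show ?case using stepD[of a r y z m] by (simp add: field_simps)
qed

theorem lemma1:
  fixes a r y z :: real and n :: nat
  assumes "0 < a" "a < 1"
    and "xc a r y z \<noteq> 0"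
    and "n \<ge> 1"
  shows "(wstar a r y z n)^2 - wstar a r y z (n + 1) * wstar a r y z (n - 1)
           = a^2 * (1 - a)^2 * r^2 * z^4 * (xc a r y z) powi (int n - 2)"
proof -
  obtain m where n: "n = Suc m" using assms(4) by (cases n) auto
  have "(xc a r y z) powi (int n - 2) = (xc a r y z)^m / xc a r y z"
  proof -
    have "int n - 2 = int m - 1" using n by simp
    then show ?thesis using assms(3) by (simp add: power_int_diff)
  qed
  then show ?thesis using closed[OF assms(3), of m] n by simp
qed

end
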